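(* For every real number $\gamma>0$ there exists an approval-based committee election instance $(N,C,\mathbf{A},k)$ (with at least one cohesive group) whose maximum JR degree $c^\ast_{\mathrm{JR}}$ and maximum EJR degree $c^\ast_{\mathrm{EJR}}$ satisfy all of the following: (1) $c^\ast_{\mathrm{JR}}/c^\ast_{\mathrm{EJR}}>\gamma$; (2) every committee $W\subseteq C$ with $|W|=k$ whose EJR degree equals $c^\ast_{\mathrm{EJR}}$ has JR degree at most $c^\ast_{\mathrm{JR}}/\gamma$; (3) every committee $W\subseteq C$ with $|W|=k$ whose JR degree equals $c^\ast_{\mathrm{JR}}$ has EJR degree at most $c^\ast_{\mathrm{EJR}}/\gamma$.
   Context: An instance consists of a set of voters $N=\{1,\dots,n\}$, a set of candidates $C$, approval ballots $\mathbf{A}=(A_1,\dots,A_n)$ with $A_i\subseteq C$, and a committee size $k$ with $1\le k\le |C|$. For $\ell\in\mathbb{N}$, a set $N'\subseteq N$ is an $\ell$-cohesive group if $|N'|\ge \ell\cdot n/k$ and $|\bigcap_{i\in N'}A_i|\ge \ell$; a $1$-cohesive group is called a cohesive group. A committee $W\subseteq C$ with $|W|=k$ achieves JR degree $c$ if every cohesive group contains at least $c$ voters $i$ with $|A_i\cap W|\ge 1$; the JR degree of $W$ is the largest such $c$. $W$ achieves EJR degree $c$ if for every $\ell\in\{1,\dots,k\}$ every $\ell$-cohesive group contains at least $c$ voters $i$ with $|A_i\cap W|\ge \ell$; the EJR degree of $W$ is the largest such $c$. The maximum JR (resp. EJR) degree of an instance is the maximum of the JR (resp. EJR) degree over all size-$k$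 committees. Only instances with at least one cohesive group are considered. *)

theory Defs
  imports Main "HOL-Library.Disjoint_Sets" Complex_Main
begin

definition valid_instance :: "nat \<Rightarrow> 'a set \<Rightarrow> (nat \<Rightarrow> 'a set) \<Rightarrow> nat \<Rightarrow> bool" where
  "valid_instance n C A k \<longleftrightarrow> n \<ge> 1 \<and> finite C \<and> (\<forall>i<n. A i \<subseteq> C) \<and> 1 \<le> k \<and> k \<le> card C"

definition cohesive :: "nat \<Rightarrow> (nat \<Rightarrow> 'a set) \<Rightarrow> nat \<Rightarrow> nat \<Rightarrow> nat set \<Rightarrow> bool" where
  "cohesive n A k l G \<longleftrightarrow> G \<subseteq> {..<n} \<and> real (card G) \<ge> real l * real n / real k
     \<and> card (\<Inter>i\<in>G. A i) \<ge> l"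

definition committee :: "'a set \<Rightarrow> nat \<Rightarrow> 'a set \<Rightarrow> bool" where
  "committee C k W \<longleftrightarrow> W \<subseteq> C \<and> card W = k"

definition achieves_JR :: "nat \<Rightarrow> (nat \<Rightarrow> 'a set) \<Rightarrow> nat \<Rightarrow> 'a set \<Rightarrow> nat \<Rightarrow> bool" where
  "achieves_JR n A k W c \<longleftrightarrow>
     (\<forall>G. cohesive n A k 1 G \<longrightarrow> card {i\<in>G. card (A i \<inter> W) \<ge> 1} \<ge> c)"

definition achieves_EJR :: "nat \<Rightarrow> (nat \<Rightarrow> 'a set) \<Rightarrow> nat \<Rightarrow> 'a set \<Rightarrow> nat \<Rightarrow> bool" where
  "achieves_EJR n A k W c \<longleftrightarrow>
     (\<forall>l\<in>{1..k}. \<forall>G. cohesive n A k l G \<longrightarrow> card {i\<in>G. card (A i \<inter> W) \<ge> l} \<ge> c)"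

text \<open>Degrees: largest c achieved (bounded by n whenever a cohesive group exists).\<close>
definition JR_degree :: "nat \<Rightarrow> (nat \<Rightarrow> 'a set) \<Rightarrow> nat \<Rightarrow> 'a set \<Rightarrow> nat" where
  "JR_degree n A k W = Max {c. achieves_JR n A k W c}"

definition EJR_degree :: "nat \<Rightarrow> (nat \<Rightarrow> 'a set) \<Rightarrow> nat \<Rightarrow> 'a set \<Rightarrow> nat" where
  "EJR_degree n A k W = Max {c. achieves_EJR n A k W c}"

definition max_JR_degree :: "nat \<Rightarrow> 'a set \<Rightarrow> (nat \<Rightarrow> 'a set) \<Rightarrow> nat \<Rightarrow> nat" where
  "max_JR_degree n C A k = Max (JR_degree n A k ` {W. committee C k W})"

definition max_EJR_degree :: "nat \<Rightarrow> 'a set \<Rightarrow> (nat \<Rightarrow> 'a set) \<Rightarrow> nat \<Rightarrow> nat" where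
  "max_EJR_degree n C A k = Max (EJR_degree n A k ` {W. committee C k W})"

end

theory Submission
  imports Defs
begin

lemma JR_degree_le:
  assumes "cohesive n A k 1 G" "card {i\<in>G. card (A i \<inter> W) \<ge> 1} \<le> b"
  shows "JR_degree n A k W \<le> b"
proof -
  have sub: "{c. achieves_JR n A k W c} \<subseteq> {..b}"
    using assms unfolding achieves_JR_def by force
  have "0 \<in> {c. achieves_JR n A k W c}" unfolding achieves_JR_def by simp
  moreover have "finite {c. achieves_JR n A k W c}" using finite_subset[OF sub] by simp
  ultimately show ?thesis unfolding JR_degree_def
    using sub by (subst Max_le_iff) auto
qed

lemma JR_degree_ge:
  assumes "cohesive n A k 1 G" "achieves_JR n A k W c"
  shows "c \<le> JR_degree n A k W"
proof -
  have sub: "{c. achieves_JR n A k W c} \<subseteq> {..card {i\<in>G. card (A i \<inter> W) \<ge> 1}}"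
    using assms(1) unfolding achieves_JR_def by force
  show ?thesis unfolding JR_degree_def
    using assms(2) finite_subset[OF sub] by (simp add: Max_ge)
qed

lemma EJR_degree_le:
  assumes "l \<in> {1..k}" "cohesive n A k l G" "card {i\<in>G. card (A i \<inter> W) \<ge> l} \<le> b"
  shows "EJR_degree n A k W \<le> b"
proof -
  have sub: "{c. achieves_EJR n A k W c} \<subseteq> {..b}"
    using assms unfolding achieves_EJR_def by force
  have "0 \<in> {c. achieves_EJR n A k W c}" unfolding achieves_EJR_def by simp
  moreover have "finite {c. achieves_EJR n A k W c}" using finite_subset[OF sub] by simp
  ultimately show ?thesis unfolding EJR_degree_def
    using sub by (subst Max_le_iff) auto
qed

lemma EJR_degree_ge:
  assumes "cohesive n A k 1 G" "1 \<le> k" "achieves_EJR n A k W c"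
  shows "c \<le> EJR_degree n A k W"
proof -
  have sub: "{c. achieves_EJR n A k W c} \<subseteq> {..card {i\<in>G. card (A i \<inter> W) \<ge> 1}}"
    using assms(1,2) unfolding achieves_EJR_def by force
  show ?thesis unfolding EJR_degree_def
    using assms(3) finite_subset[OF sub] by (simp add: Max_ge)
qed

definition AA :: "nat \<Rightarrow> nat \<Rightarrow> nat set" where
  "AA k i = insert (i div k) (if i mod k < 2 then {k, Suc k} else {})"

lemma block_cohesive:
  assumes "j < k"
  shows "cohesive (k*k) (AA k) k 1 ((\<lambda>r. j*k+r) ` {..<k})"
proof -
  have k0: "k > 0" using assms by simp
  have "j*k + k \<le> k*k" using assms by (metis add.commute mult.commute mult_Suc_right mult_le_mono2 Suc_leI)
  then have s: "(\<lambda>r. j*k+r) ` {..<k} \<subseteq> {..<k*k}" by auto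
  have c: "card ((\<lambda>r. j*k+r) ` {..<k}) = k" by (simp add: card_image)
  have "j \<in> (\<Inter>i\<in>(\<lambda>r. j*k+r) ` {..<k}. AA k i)" using k0 by (auto simp: AA_def)
  moreover have "finite (\<Inter>i\<in>(\<lambda>r. j*k+r) ` {..<k}. AA k i)"
  proof (rule finite_subset[of _ "AA k (j*k)"])
    have "j*k \<in> (\<lambda>r. j*k+r) ` {..<k}" using k0 by (metis add_0_right image_eqI lessThan_iff)
    then show "(\<Inter>i\<in>(\<lambda>r. j*k+r) ` {..<k}. AA k i) \<subseteq> AA k (j*k)" by blast
  qed (simp add: AA_def)
  ultimately have "card (\<Inter>i\<in>(\<lambda>r. j*k+r) ` {..<k}. AA k i) \<ge> 1"
    by (metis One_nat_def Suc_leI card_gt_0_iff empty_iff)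
  then show ?thesis unfolding cohesive_def using s c k0 by auto
qed


lemma mod1: "k \<ge> 2 \<Longrightarrow> (j*k + 1) mod k = (1::nat)"
  using mod_mult_self3[of j k 1] by simp

definition PP :: "nat \<Rightarrow> nat set" where
  "PP k = (\<lambda>j. j*k) ` {..<k} \<union> (\<lambda>j. j*k+1) ` {..<k}"

lemma PP_mod: assumes "k \<ge> 2" "i \<in> PP k" shows "i mod k < 2" "i < k*k"
proof -
  obtain j where j: "j < k" "i = j*k \<or> i = j*k+1" using assms(2) unfolding PP_def by auto
  then show "i mod k < 2" using assms(1) mod1[OF assms(1), of j] by auto
  have "j*k + k \<le> k*k" using j by (metis add.commute mult.commute mult_Suc_right mult_le_mono2 Suc_leI)
  then show "i < k*k" using j assms(1) by auto
qed

lemma PP_card: assumes "k \<ge> 2" shows "card (PP k) = 2*k"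
proof -
  have d: "(\<lambda>j. j*k) ` {..<k} \<inter> (\<lambda>j. j*k+1) ` {..<k} = {}"
  proof (rule ccontr)
    assume "\<not> ?thesis"
    then obtain a b where "a*k = b*k+1" by auto
    then have "(a*k) mod k = (b*k+1) mod k" by simp
    then show False using assms mod1[OF assms, of b] by simp
  qed
  have i1: "inj_on (\<lambda>j. j*k) {..<k}" using assms by (auto simp: inj_on_def)
  have i2: "inj_on (\<lambda>j. j*k+1) {..<k}" using assms by (auto simp: inj_on_def)
  show ?thesis unfolding PP_def
    by (subst card_Un_disjoint) (use d i1 i2 in \<open>auto simp: card_image\<close>)
qed

lemma PP_cohesive:
  assumes "k \<ge> 2"
  shows "cohesive (k*k) (AA k) k 2 (PP k)"
proof -
  have s: "PP k \<subseteq> {..<k*k}" using PP_mod[OF assms] by auto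
  have 0: "0 \<in> PP k" using assms unfolding PP_def by force
  have sub: "{k, Suc k} \<subseteq> (\<Inter>i\<in>PP k. AA k i)" using PP_mod(1)[OF assms] by (auto simp: AA_def)
  have fin: "finite (\<Inter>i\<in>PP k. AA k i)"
  proof (rule finite_subset[of _ "AA k 0"])
    show "(\<Inter>i\<in>PP k. AA k i) \<subseteq> AA k 0" using 0 by blast
  qed (simp add: AA_def)
  have "card {k, Suc k} \<le> card (\<Inter>i\<in>PP k. AA k i)" using card_mono[OF fin sub] .
  then have "card (\<Inter>i\<in>PP k. AA k i) \<ge> 2" by simp
  moreover have "real (card (PP k)) \<ge> real 2 * real (k*k) / real k"
    using PP_card[OF assms] assms by simp
  ultimately show ?thesis unfolding cohesive_def using s by auto
qed

lemma no_x_EJR: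
  assumes "k \<ge> 2" "k \<notin> W" "Suc k \<notin> W"
  shows "EJR_degree (k*k) (AA k) k W \<le> 0"
proof (rule EJR_degree_le[OF _ PP_cohesive[OF assms(1)]])
  show "2 \<in> {1..k}" using assms by simp
  have "\<forall>i. card (AA k i \<inter> W) \<le> 1"
  proof
    fix i
    have "AA k i \<inter> W \<subseteq> {i div k}" using assms by (auto simp: AA_def)
    then show "card (AA k i \<inter> W) \<le> 1" by (metis card.empty card.insert finite.emptyI card_mono finite_insert empty_iff One_nat_def insert_absorb)
  qed
  then have "\<forall>i. \<not> 2 \<le> card (AA k i \<inter> W)" by (metis Suc_1 not_less_eq_eq)
  then have "{i \<in> PP k. 2 \<le> card (AA k i \<inter> W)} = {}" by blast
  then show "card {i \<in> PP k. 2 \<le> card (AA k i \<inter> W)} \<le> 0" by (metis card.empty le_refl)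
qed


lemma has_x_deg:
  assumes "k \<ge> 3" "W \<subseteq> {..<k+2}" "card W = k" "k \<in> W \<or> Suc k \<in> W"
  shows "JR_degree (k*k) (AA k) k W \<le> 2 \<and> EJR_degree (k*k) (AA k) k W \<le> 2"
proof -
  have finW: "finite W" using assms(2) finite_subset by blast
  have "\<not> {..<k} \<subseteq> W"
  proof
    assume h: "{..<k} \<subseteq> W"
    obtain x where x: "x \<in> W" "x \<notin> {..<k}" using assms(4) by auto
    have "insert x {..<k} \<subseteq> W" using h x by auto
    from card_mono[OF finW this] x show False using assms(3) by simp
  qed
  then obtain j where j: "j < k" "j \<notin> W" by auto
  let ?G = "(\<lambda>r. j*k+r) ` {..<k}"
  have coh: "cohesive (k*k) (AA k) k 1 ?G" using block_cohesive[OF j(1)] .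
  have "{i \<in> ?G. 1 \<le> card (AA k i \<inter> W)} \<subseteq> {j*k, j*k+1}"
  proof
    fix i assume i: "i \<in> {i \<in> ?G. 1 \<le> card (AA k i \<inter> W)}"
    then obtain r where r: "r < k" "i = j*k+r" by auto
    have dm: "i div k = j" "i mod k = r" using r by auto
    show "i \<in> {j*k, j*k+1}"
    proof (rule ccontr)
      assume "i \<notin> {j*k, j*k+1}"
      then have "r \<ge> 2" using r by auto
      then have "AA k i \<inter> W = {}" using dm j by (auto simp: AA_def)
      then show False using i by simp
    qed
  qed
  then have "card {i \<in> ?G. 1 \<le> card (AA k i \<inter> W)} \<le> card {j*k, j*k+1}"
    by (intro card_mono) auto
  also have "\<dots> \<le> 2" by (simp add: card_insert_le_m1)
  finally have b: "card {i \<in> ?G. 1 \<le> card (AA k i \<inter> W)} \<le> 2" .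
  show ?thesis
    using JR_degree_le[OF coh b] EJR_degree_le[OF _ coh b] assms(1) by auto
qed

lemma Y_JR:
  assumes "k \<ge> 1"
  shows "achieves_JR (k*k) (AA k) k {..<k} k"
  unfolding achieves_JR_def
proof (intro allI impI)
  fix G assume G: "cohesive (k*k) (AA k) k 1 G"
  have "\<forall>i\<in>G. 1 \<le> card (AA k i \<inter> {..<k})"
  proof
    fix i assume "i \<in> G"
    then have "i < k*k" using G unfolding cohesive_def by auto
    then have "i div k < k" by (simp add: less_mult_imp_div_less)
    then have "i div k \<in> AA k i \<inter> {..<k}" by (simp add: AA_def)
    moreover have "finite (AA k i \<inter> {..<k})" by simp
    ultimately show "1 \<le> card (AA k i \<inter> {..<k})" by (metis One_nat_def Suc_leI card_gt_0_iff empty_iff)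
  qed
  then have e: "{i \<in> G. 1 \<le> card (AA k i \<inter> {..<k})} = G" by auto
  have "real (card G) \<ge> real (k*k) / real k" using G unfolding cohesive_def by simp
  then have "real (card G) \<ge> real k" using assms by simp
  then show "k \<le> card {i \<in> G. 1 \<le> card (AA k i \<inter> {..<k})}" using e by simp
qed


lemma card_le1: "S \<subseteq> {a} \<Longrightarrow> card S \<le> 1"
  by (metis card.empty card.insert finite.emptyI card_mono finite_insert empty_iff One_nat_def insert_absorb)

lemma card_ge1: "finite S \<Longrightarrow> a \<in> S \<Longrightarrow> 1 \<le> card S"
  by (metis One_nat_def Suc_leI card_gt_0_iff empty_iff)

lemma W0_EJR:
  assumes k3: "k \<ge> 3"
  shows "achieves_EJR (k*k) (AA k) k ({k, Suc k} \<union> {..<k-2}) 1"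
  unfolding achieves_EJR_def
proof (intro ballI allI impI)
  let ?W = "{k, Suc k} \<union> {..<k-2}"
  fix l G assume l: "l \<in> {1..k}" and G: "cohesive (k*k) (AA k) k l G"
  have Gs: "G \<subseteq> {..<k*k}" using G unfolding cohesive_def by auto
  have finG: "finite G" using Gs finite_subset by blast
  have "real (card G) \<ge> real l * real (k*k) / real k" using G unfolding cohesive_def by simp
  then have cG: "real (card G) \<ge> real l * real k" using k3 by simp
  then have "real (l * k) \<le> real (card G)" by simp
  then have "card G \<ge> l * k" by (simp only: of_nat_le_iff)
  moreover have "l * k \<ge> 1" using l k3 by simp
  ultimately have "card G > 0" by linarith
  then have "G \<noteq> {}" by auto
  then obtain i0 where i0: "i0 \<in> G" by blast
  let ?I = "\<Inter>i\<in>G. AA k i"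
  have cI: "card ?I \<ge> l" using G unfolding cohesive_def by auto
  have Isub: "\<And>i. i \<in> G \<Longrightarrow> ?I \<subseteq> AA k i" by blast
  have finI: "finite ?I" using finite_subset[OF Isub[OF i0]] by (simp add: AA_def)
  have single: "\<And>i. i mod k \<ge> 2 \<Longrightarrow> AA k i = {i div k}" by (simp add: AA_def)
  have divlt: "\<And>i. i \<in> G \<Longrightarrow> i div k < k" using Gs by (auto simp: less_mult_imp_div_less)
  have "\<exists>i\<in>G. l \<le> card (AA k i \<inter> ?W)"
  proof (cases "l = 1")
    case True
    then have "?I \<noteq> {}" using cI by auto
    then obtain c where c: "c \<in> ?I" by auto
    show ?thesis
    proof (cases "\<exists>i\<in>G. i mod k < 2")
      case True
      then obtain i where i: "i \<in> G" "i mod k < 2" by auto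
      then have "k \<in> AA k i \<inter> ?W" by (simp add: AA_def)
      then show ?thesis using i card_ge1[of "AA k i \<inter> ?W" k] \<open>l = 1\<close> by (auto simp: AA_def)
    next
      case False
      then have cd: "\<And>i. i \<in> G \<Longrightarrow> c = i div k" using c single by fastforce
      show ?thesis
      proof (cases "c < k - 2")
        case True
        then have "c \<in> AA k i0 \<inter> ?W" using cd[OF i0] by (simp add: AA_def)
        moreover have "finite (AA k i0 \<inter> ?W)" by (simp add: AA_def)
        ultimately have "1 \<le> card (AA k i0 \<inter> ?W)" using card_ge1[of "AA k i0 \<inter> ?W" c] by simp
        then show ?thesis using i0 \<open>l = 1\<close> by blast
      next
        case cge: False
        have "G \<subseteq> (\<lambda>r. c*k + r) ` {2..<k}"
        proof
          fix i assume i: "i \<in> G"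
          have "i = c*k + i mod k" using cd[OF i] by simp
          moreover have "i mod k \<in> {2..<k}" using False i k3 by auto
          ultimately show "i \<in> (\<lambda>r. c*k + r) ` {2..<k}" by (metis image_eqI)
        qed
        then have "card G \<le> card ((\<lambda>r. c*k + r) ` {2..<k})" by (intro card_mono) auto
        also have "\<dots> \<le> k - 2" using card_image_le[of "{2..<k}" "\<lambda>r. c*k + r"] by simp
        finally show ?thesis using \<open>card G \<ge> l * k\<close> \<open>l = 1\<close> k3 by simp
      qed
    qed
  next
    case False
    then have l2: "l \<ge> 2" using l by auto
    have m0: "i0 mod k < 2"
    proof (rule ccontr)
      assume "\<not> i0 mod k < 2"
      then have "AA k i0 = {i0 div k}" using single by simp
      then have "?I \<subseteq> {i0 div k}" using Isub[OF i0] by simp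
          then have "card ?I \<le> 1" by (rule card_le1)
      then show False using cI l2 by simp
    qed
    have "{k, Suc k} \<subseteq> AA k i0 \<inter> ?W" using m0 by (auto simp: AA_def)
    then have c2: "card (AA k i0 \<inter> ?W) \<ge> 2"
      using card_mono[of "AA k i0 \<inter> ?W" "{k, Suc k}"] by (simp add: AA_def)
    show ?thesis
    proof (cases "l = 2")
      case True then show ?thesis using i0 c2 by auto
    next
      case False
      then have l3: "l \<ge> 3" using l2 by simp
      have "G \<subseteq> {(i0 div k)*k, (i0 div k)*k + 1}"
      proof
        fix i assume i: "i \<in> G"
        have mi: "i mod k < 2"
        proof (rule ccontr)
          assume "\<not> i mod k < 2"
          then have "AA k i = {i div k}" using single by simp
          then have "?I \<subseteq> {i div k}" using Isub[OF i] by simp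
          then have "card ?I \<le> 1" by (rule card_le1)
          then show False using cI l3 by simp
        qed
        have di: "i div k = i0 div k"
        proof (rule ccontr)
          assume ne: "i div k \<noteq> i0 div k"
          have "?I \<subseteq> AA k i \<inter> AA k i0" using Isub[OF i] Isub[OF i0] by blast
          also have "\<dots> \<subseteq> {k, Suc k}" using ne divlt[OF i] divlt[OF i0] by (auto simp: AA_def)
          finally have "card ?I \<le> card {k, Suc k}" by (intro card_mono) auto
          then show False using cI l3 by simp
        qed
        have "i = (i div k)*k + i mod k" by simp
        then show "i \<in> {(i0 div k)*k, (i0 div k)*k + 1}" using mi di by auto
      qed
      then have "card G \<le> card {(i0 div k)*k, (i0 div k)*k + 1}" by (intro card_mono) auto
      also have "\<dots> \<le> 2" by (simp add: card_insert_le_m1)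
      finally have "card G \<le> 2" .
      moreover have "l * k \<ge> 3 * 3" using mult_le_mono[OF l3 k3] by (simp only:)
      ultimately show ?thesis using \<open>card G \<ge> l * k\<close> by linarith
    qed
  qed
  then obtain i where i: "i \<in> G" "l \<le> card (AA k i \<inter> ?W)" by blast
  have "finite {i \<in> G. l \<le> card (AA k i \<inter> ?W)}" using finG by simp
  then show "1 \<le> card {i \<in> G. l \<le> card (AA k i \<inter> ?W)}" using card_ge1[of _ i] i by simp
qed


theorem proposition1:
  fixes \<gamma> :: real
  assumes "\<gamma> > 0"
  shows "\<exists>(n::nat) (C::nat set) (A::nat \<Rightarrow> nat set) (k::nat).
     valid_instance n C A k \<and> (\<exists>G. cohesive n A k 1 G) \<and>
     real (max_JR_degree n C A k) / real (max_EJR_degree n C A k) > \<gamma> \<and>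
     (\<forall>W. committee C k W \<and> EJR_degree n A k W = max_EJR_degree n C A k \<longrightarrow>
          real (JR_degree n A k W) \<le> real (max_JR_degree n C A k) / \<gamma>) \<and>
     (\<forall>W. committee C k W \<and> JR_degree n A k W = max_JR_degree n C A k \<longrightarrow>
          real (EJR_degree n A k W) \<le> real (max_EJR_degree n C A k) / \<gamma>)"
proof -
  define k where "k = nat \<lceil>2*\<gamma>\<rceil> + 3"
  have k3: "k \<ge> 3" unfolding k_def by simp
  have kg: "real k > 2*\<gamma>" unfolding k_def by linarith
  define C where "C = {..<k+2}"
  let ?n = "k*k" and ?A = "AA k"
  have valid: "valid_instance ?n C ?A k"
    unfolding valid_instance_def
  proof (intro conjI allI impI)
    show "1 \<le> k*k" using k3 by simp
    show "finite C" unfolding C_def by simp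
    show "1 \<le> k" using k3 by simp
    show "k \<le> card C" unfolding C_def by simp
    fix i assume "i < k*k"
    then have "i div k < k" by (simp add: less_mult_imp_div_less)
    then show "?A i \<subseteq> C" unfolding C_def AA_def by auto
  qed
  have coh0: "cohesive ?n ?A k 1 ((\<lambda>r. 0*k+r) ` {..<k})" using block_cohesive[of 0 k] k3 by simp
  let ?Com = "{W. committee C k W}"
  have finCom: "finite ?Com"
    by (rule finite_subset[of _ "Pow C"]) (auto simp: committee_def C_def)
  have Y: "{..<k} \<in> ?Com" unfolding committee_def C_def by auto
  define W0 where "W0 = {k, Suc k} \<union> {..<k-2}"
  have "card W0 = k" unfolding W0_def using k3
    by (subst card_Un_disjoint) auto
  then have W0: "W0 \<in> ?Com" unfolding committee_def C_def W0_def by auto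
  define MJ where "MJ = max_JR_degree ?n C ?A k"
  define ME where "ME = max_EJR_degree ?n C ?A k"
  have "JR_degree ?n ?A k {..<k} \<ge> k"
    using JR_degree_ge[OF coh0 Y_JR] k3 by simp
  moreover have "JR_degree ?n ?A k {..<k} \<le> MJ"
    unfolding MJ_def max_JR_degree_def using finCom Y by simp
  ultimately have MJk: "MJ \<ge> k" by simp
  have "EJR_degree ?n ?A k W0 \<ge> 1"
    using EJR_degree_ge[OF coh0 _ W0_EJR[OF k3]] k3 unfolding W0_def by simp
  moreover have "EJR_degree ?n ?A k W0 \<le> ME"
    unfolding ME_def max_EJR_degree_def using finCom W0 by simp
  ultimately have ME1: "ME \<ge> 1" by simp
  have Wb: "W \<subseteq> {..<k+2}" "card W = k" if "W \<in> ?Com" for W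
    using that unfolding committee_def C_def by auto
  have noX: "EJR_degree ?n ?A k W \<le> 0" if "k \<notin> W" "Suc k \<notin> W" for W
    using no_x_EJR[of k W] k3 that by simp
  have EJR2: "EJR_degree ?n ?A k W \<le> 2" if "W \<in> ?Com" for W
  proof (cases "k \<in> W \<or> Suc k \<in> W")
    case True then show ?thesis using has_x_deg[OF k3 Wb[OF that] True] by simp
  next
    case False then show ?thesis using noX[of W] by simp
  qed
  have ME2: "ME \<le> 2"
    unfolding ME_def max_EJR_degree_def using finCom Y EJR2 by (subst Max_le_iff) auto
  have c1: "real MJ / real ME > \<gamma>"
  proof -
    have "real MJ / 2 \<le> real MJ / real ME"
      using ME1 ME2 by (intro divide_left_mono) auto
    moreover have "real k / 2 \<le> real MJ / 2" using MJk by simp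
    ultimately have "real MJ / real ME \<ge> real k / 2" by linarith
    then show ?thesis using kg by linarith
  qed
  have c2: "real (JR_degree ?n ?A k W) \<le> real MJ / \<gamma>" if "W \<in> ?Com" "EJR_degree ?n ?A k W = ME" for W
  proof -
    have "k \<in> W \<or> Suc k \<in> W" using noX[of W] that(2) ME1 by auto
    then have "JR_degree ?n ?A k W \<le> 2" using has_x_deg[OF k3 Wb[OF that(1)]] by simp
    moreover have "2 \<le> real MJ / \<gamma>"
      using MJk kg assms by (simp add: pos_le_divide_eq)
    ultimately show ?thesis by linarith
  qed
  have c3: "real (EJR_degree ?n ?A k W) \<le> real ME / \<gamma>" if "W \<in> ?Com" "JR_degree ?n ?A k W = MJ" for W
  proof -
    have "\<not> (k \<in> W \<or> Suc k \<in> W)"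
    proof
      assume "k \<in> W \<or> Suc k \<in> W"
      then have "JR_degree ?n ?A k W \<le> 2" using has_x_deg[OF k3 Wb[OF that(1)]] by simp
      then show False using that(2) MJk k3 by simp
    qed
    then have "EJR_degree ?n ?A k W = 0" using noX[of W] by simp
    then show ?thesis using assms by simp
  qed
  show ?thesis
    apply (rule exI[of _ ?n], rule exI[of _ C], rule exI[of _ ?A], rule exI[of _ k])
    using valid coh0 c1 c2 c3 unfolding MJ_def ME_def by blast
qed

end
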